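(* Let $R$ be a $*$-ring. Then $R$ is strongly $J$-$*$-clean if and only if (1) $R$ is strongly $*$-clean, and (2) $J(R)=\{x\in R \mid 1-x\in U(R)\}$.
   Context: All rings are associative with identity. A $*$-ring is a ring $R$ with an involution $*$, i.e. a map $a\mapsto a^*$ with $(a+b)^*=a^*+b^*$, $(ab)^*=b^*a^*$, $(a^* )^*=a$. $U(R)$ denotes the group of units and $J(R)$ the Jacobson radical of $R$. A projection is an element $e$ with $e^2=e=e^*$. $R$ is strongly $J$-$*$-clean if every $a\in R$ can be written $a=e+u$ with $e$ a projection, $u\in J(R)$ and $ae=ea$. $R$ is strongly $*$-clean if every $a\in R$ can be written $a=e+u$ with $e$ a projection, $u\in U(R)$ and $eu=ue$. *)

theory Defs
  imports Main
begin

text \<open>A *-ring: a ring (type class ring_1, associative with identity) together with an involution.\<close>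
definition involution :: "('a::ring_1 \<Rightarrow> 'a) \<Rightarrow> bool" where
  "involution st \<longleftrightarrow> (\<forall>a b. st (a + b) = st a + st b \<and> st (a * b) = st b * st a \<and> st (st a) = a)"

definition ring_unit :: "'a::ring_1 \<Rightarrow> bool" where
  "ring_unit a \<longleftrightarrow> (\<exists>b. a * b = 1 \<and> b * a = 1)"

definition left_ideal :: "'a::ring_1 set \<Rightarrow> bool" where
  "left_ideal I \<longleftrightarrow> 0 \<in> I \<and> (\<forall>x\<in>I. \<forall>y\<in>I. x + y \<in> I) \<and> (\<forall>x\<in>I. - x \<in> I) \<and> (\<forall>r. \<forall>x\<in>I. r * x \<in> I)"

definition maximal_left_ideal :: "'a::ring_1 set \<Rightarrow> bool" where
  "maximal_left_ideal I \<longleftrightarrow> left_ideal I \<and> I \<noteq> UNIV \<and>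
     (\<forall>K. left_ideal K \<and> I \<subseteq> K \<and> K \<noteq> UNIV \<longrightarrow> K = I)"

definition jacobson :: "'a::ring_1 set" where
  "jacobson = \<Inter> {I. maximal_left_ideal I}"

definition projection :: "('a::ring_1 \<Rightarrow> 'a) \<Rightarrow> 'a \<Rightarrow> bool" where
  "projection st e \<longleftrightarrow> e * e = e \<and> st e = e"

definition strongly_J_star_clean :: "('a::ring_1 \<Rightarrow> 'a) \<Rightarrow> bool" where
  "strongly_J_star_clean st \<longleftrightarrow>
     (\<forall>a. \<exists>e u. a = e + u \<and> projection st e \<and> u \<in> jacobson \<and> a * e = e * a)"

definition strongly_star_clean :: "('a::ring_1 \<Rightarrow> 'a) \<Rightarrow> bool" where
  "strongly_star_clean st \<longleftrightarrow>
     (\<forall>a. \<exists>e u. a = e + u \<and> projection st e \<and> ring_unit u \<and> e * u = u * e)"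

end

theory Submission
  imports Defs
begin

lemma maximal_exists:
  fixes I :: "'a::ring_1 set"
  assumes I: "left_ideal I" and n1: "1 \<notin> I"
  shows "\<exists>M. maximal_left_ideal M \<and> I \<subseteq> M"
proof -
  let ?A = "{K::'a set. left_ideal K \<and> I \<subseteq> K \<and> 1 \<notin> K}"
  have "\<exists>M\<in>?A. \<forall>X\<in>?A. M \<subseteq> X \<longrightarrow> X = M"
  proof (rule subset_Zorn)
    fix C assume ch: "subset.chain ?A C"
    show "\<exists>U\<in>?A. \<forall>X\<in>C. X \<subseteq> U"
    proof (cases "C = {}")
      case True thus ?thesis using I n1 by auto
    next
      case False
      have sub: "C \<subseteq> ?A" and tot: "\<forall>X\<in>C. \<forall>Y\<in>C. X \<subseteq> Y \<or> Y \<subseteq> X"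
        using ch by (auto simp: subset_chain_def)
      have "left_ideal (\<Union>C)"
        unfolding left_ideal_def
      proof (intro conjI ballI allI)
        show "0 \<in> \<Union>C" using False sub by (auto simp: left_ideal_def)
      next
        fix x y assume "x \<in> \<Union>C" "y \<in> \<Union>C"
        then obtain X Y where X: "X \<in> C" "x \<in> X" and Y: "Y \<in> C" "y \<in> Y" by auto
        from tot X Y have "X \<subseteq> Y \<or> Y \<subseteq> X" by auto
        thus "x + y \<in> \<Union>C"
        proof
          assume "X \<subseteq> Y"
          have L: "left_ideal Y" using Y sub by blast
          have "x \<in> Y" "y \<in> Y" using X Y \<open>X \<subseteq> Y\<close> by auto
          hence "x + y \<in> Y" using L unfolding left_ideal_def by blast
          thus ?thesis using Y by blast
        next
          assume "Y \<subseteq> X"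
          have L: "left_ideal X" using X sub by blast
          have "x \<in> X" "y \<in> X" using X Y \<open>Y \<subseteq> X\<close> by auto
          hence "x + y \<in> X" using L unfolding left_ideal_def by blast
          thus ?thesis using X by blast
        qed
      next
        fix x assume "x \<in> \<Union>C"
        then obtain X where X: "X \<in> C" "x \<in> X" by blast
        have "left_ideal X" using X sub by blast
        hence "- x \<in> X" using X unfolding left_ideal_def by blast
        thus "- x \<in> \<Union>C" using X by blast
      next
        fix r x assume "x \<in> \<Union>C"
        then obtain X where X: "X \<in> C" "x \<in> X" by blast
        have "left_ideal X" using X sub by blast
        hence "r * x \<in> X" using X unfolding left_ideal_def by blast
        thus "r * x \<in> \<Union>C" using X by blast
      qed
      moreover have "I \<subseteq> \<Union>C" "1 \<notin> \<Union>C" using False sub by auto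
      ultimately show ?thesis by blast
    qed
  qed
  then obtain M where M: "M \<in> ?A" and mx: "\<forall>X\<in>?A. M \<subseteq> X \<longrightarrow> X = M" by blast
  have one: "\<And>K::'a set. left_ideal K \<Longrightarrow> (K \<noteq> UNIV \<longleftrightarrow> 1 \<notin> K)"
  proof -
    fix K :: "'a set" assume K: "left_ideal K"
    show "K \<noteq> UNIV \<longleftrightarrow> 1 \<notin> K"
    proof
      assume "K \<noteq> UNIV" then obtain z where "z \<notin> K" by auto
      thus "1 \<notin> K" using K unfolding left_ideal_def by (metis mult.right_neutral)
    qed auto
  qed
  have "maximal_left_ideal M"
    unfolding maximal_left_ideal_def using M mx one by blast
  thus ?thesis using M by blast
qed

lemma jac_left_ideal: "left_ideal (jacobson :: 'a::ring_1 set)"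
  unfolding jacobson_def left_ideal_def maximal_left_ideal_def by auto

lemma jac_add: "x \<in> jacobson \<Longrightarrow> y \<in> jacobson \<Longrightarrow> x + y \<in> (jacobson :: 'a::ring_1 set)"
  using jac_left_ideal unfolding left_ideal_def by blast

lemma jac_mult: "x \<in> jacobson \<Longrightarrow> r * x \<in> (jacobson :: 'a::ring_1 set)"
  using jac_left_ideal unfolding left_ideal_def by blast

lemma jac_left_inv:
  fixes j :: "'a::ring_1"
  assumes j: "j \<in> jacobson"
  shows "\<exists>b. b * (1 - j) = 1"
proof (rule ccontr)
  assume nb: "\<not> (\<exists>b. b * (1 - j) = 1)"
  let ?I = "{r * (1 - j) | r. True}"
  have li: "left_ideal ?I" unfolding left_ideal_def
  proof (intro conjI ballI allI)
    show "0 \<in> ?I" by (rule CollectI, rule exI[of _ 0]) simp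
  next
    fix x y assume "x \<in> ?I" "y \<in> ?I"
    then obtain r s where "x = r * (1 - j)" "y = s * (1 - j)" by auto
    thus "x + y \<in> ?I" by (auto simp: distrib_right intro!: exI[of _ "r + s"])
  next
    fix x assume "x \<in> ?I"
    then obtain r where "x = r * (1 - j)" by auto
    thus "- x \<in> ?I" by (auto intro!: exI[of _ "- r"])
  next
    fix r x assume "x \<in> ?I"
    then obtain s where "x = s * (1 - j)" by auto
    thus "r * x \<in> ?I" by (auto simp: mult.assoc intro!: exI[of _ "r * s"])
  qed
  have "1 \<notin> ?I" using nb by auto
  then obtain M where M: "maximal_left_ideal M" "?I \<subseteq> M" using maximal_exists[OF li] by blast
  have "j \<in> M" using j M(1) unfolding jacobson_def by auto
  moreover have "1 - j \<in> ?I" by (rule CollectI, rule exI[of _ 1], simp)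
  hence "1 - j \<in> M" using M(2) by (rule subsetD[rotated])
  moreover have LM: "left_ideal M" using M(1) unfolding maximal_left_ideal_def by simp
  ultimately have "(1 - j) + j \<in> M" unfolding left_ideal_def by blast
  hence one: "1 \<in> M" by simp
  have zM: "z \<in> M" for z :: 'a
  proof -
    have "z * 1 \<in> M" using LM one unfolding left_ideal_def by blast
    thus "z \<in> M" by simp
  qed
  hence "M = UNIV" by blast
  thus False using M(1) unfolding maximal_left_ideal_def by blast
qed

lemma jac_unit:
  fixes j :: "'a::ring_1"
  assumes j: "j \<in> jacobson"
  shows "ring_unit (1 - j)"
proof -
  obtain b where b: "b * (1 - j) = 1" using jac_left_inv[OF j] by blast
  have "b = 1 - (- (b * j))" using b by (simp add: algebra_simps)
  moreover have "- (b * j) \<in> jacobson" using jac_mult[OF j, of "- b"] by simp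
  ultimately obtain c where c: "c * b = 1" using jac_left_inv by metis
  have "c = c * (b * (1 - j))" using b by simp
  also have "\<dots> = 1 - j" using c by (simp add: mult.assoc[symmetric])
  finally have "(1 - j) * b = 1" using c by simp
  thus ?thesis using b unfolding ring_unit_def by blast
qed

lemma unit_plus_jac:
  fixes v j :: "'a::ring_1"
  assumes v: "ring_unit v" and j: "j \<in> jacobson"
  shows "ring_unit (v + j)"
proof -
  obtain w where w: "v * w = 1" "w * v = 1" using v unfolding ring_unit_def by blast
  have "- (w * j) \<in> jacobson" using jac_mult[OF j, of "- w"] by simp
  then obtain z where z: "(1 - - (w * j)) * z = 1" "z * (1 - - (w * j)) = 1"
    using jac_unit unfolding ring_unit_def by blast
  have eq: "v + j = v * (1 - - (w * j))"
    by (simp add: algebra_simps mult.assoc[symmetric] w)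
  have "(v + j) * (z * w) = 1" unfolding eq
    by (metis mult.assoc z(1) w(1) mult.right_neutral)
  moreover have "(z * w) * (v + j) = 1" unfolding eq
    by (metis mult.assoc z(2) w(2) mult.left_neutral)
  ultimately show ?thesis unfolding ring_unit_def by blast
qed

lemma idem_unit:
  fixes f :: "'a::ring_1"
  assumes "f * f = f" "ring_unit f"
  shows "f = 1"
proof -
  obtain g where "g * f = 1" using assms(2) unfolding ring_unit_def by blast
  hence "g * (f * f) = g * f" using assms(1) by simp
  thus ?thesis using \<open>g * f = 1\<close> by (simp add: mult.assoc[symmetric])
qed

lemma st_props:
  assumes "involution st"
  shows "st 1 = 1" "st (- x) = - st x" "st (x - y) = st x - st y"
proof -
  have m1: "st (1 * st 1) = st (st 1) * st 1" using assms unfolding involution_def by blast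
  have i1: "st (st 1) = 1" using assms unfolding involution_def by blast
  show s1: "st 1 = 1" using m1 i1 by simp
  have "st (0 + 0) = st 0 + st 0" using assms unfolding involution_def by blast
  hence s0: "st 0 = 0" by simp
  have "st (x + - x) = st x + st (- x)" using assms unfolding involution_def by blast
  hence "st x + st (- x) = 0" using s0 by simp
  thus sn: "st (- x) = - st x" by (simp add: eq_neg_iff_add_eq_0 add.commute)
  have "st (x + - y) = st x + st (- y)" using assms unfolding involution_def by blast
  moreover have "st (- y) = - st y"
  proof -
    have "st (y + - y) = st y + st (- y)" using assms unfolding involution_def by blast
    hence "st y + st (- y) = 0" using s0 by simp
    thus ?thesis by (simp add: eq_neg_iff_add_eq_0 add.commute)
  qed
  ultimately show "st (x - y) = st x - st y" by simp
qed

theorem theorem3p4: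
  fixes st :: "'a::ring_1 \<Rightarrow> 'a"
  assumes "involution st"
  shows "strongly_J_star_clean st \<longleftrightarrow>
           (strongly_star_clean st \<and> (jacobson :: 'a set) = {x. ring_unit (1 - x)})"
proof
  assume H: "strongly_J_star_clean st"
  have "strongly_star_clean st" unfolding strongly_star_clean_def
  proof
    fix a :: 'a
    obtain e u where eu: "a - 1 = e + u" "projection st e" "u \<in> jacobson" "(a - 1) * e = e * (a - 1)"
      using H unfolding strongly_J_star_clean_def by blast
    have "ring_unit (1 - - u)" using jac_unit[of "-u"] jac_mult[OF eu(3), of "-1"] by simp
    hence un: "ring_unit (1 + u)" by simp
    have "(e + u) * e = e * (e + u)" using eu(4) eu(1) by simp
    hence "e * e + u * e = e * e + e * u" by (simp add: distrib_left distrib_right)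
    hence "e * u = u * e" by simp
    hence "e * (1 + u) = (1 + u) * e" by (simp add: algebra_simps)
    moreover have "a = e + (1 + u)" using eu(1) by (simp add: algebra_simps)
    ultimately show "\<exists>e u. a = e + u \<and> projection st e \<and> ring_unit u \<and> e * u = u * e"
      using eu(2) un by blast
  qed
  moreover have "(jacobson :: 'a set) = {x. ring_unit (1 - x)}"
  proof (intro set_eqI iffI)
    fix x :: 'a assume "x \<in> jacobson" thus "x \<in> {x. ring_unit (1 - x)}" using jac_unit by auto
  next
    fix x :: 'a assume "x \<in> {x. ring_unit (1 - x)}"
    hence ux: "ring_unit (1 - x)" by simp
    obtain e u where eu: "x = e + u" "projection st e" "u \<in> jacobson"
      using H unfolding strongly_J_star_clean_def by blast
    have "ring_unit ((1 - x) + u)" using unit_plus_jac[OF ux eu(3)] .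
    moreover have "(1 - x) + u = 1 - e" using eu(1) by simp
    ultimately have "ring_unit (1 - e)" by simp
    moreover have "(1 - e) * (1 - e) = 1 - e" using eu(2) unfolding projection_def
      by (simp add: algebra_simps)
    ultimately have "1 - e = 1" using idem_unit by blast
    hence "e = 0" by simp
    thus "x \<in> jacobson" using eu by simp
  qed
  ultimately show "strongly_star_clean st \<and> (jacobson :: 'a set) = {x. ring_unit (1 - x)}" by blast
next
  assume H: "strongly_star_clean st \<and> (jacobson :: 'a set) = {x. ring_unit (1 - x)}"
  have two: "(2::'a) \<in> jacobson" using H unfolding ring_unit_def by (auto intro!: exI[of _ "-1"])
  show "strongly_J_star_clean st" unfolding strongly_J_star_clean_def
  proof
    fix a :: 'a
    obtain f w where fw: "a = f + w" "projection st f" "ring_unit w" "f * w = w * f"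
      using H unfolding strongly_star_clean_def by blast
    have "1 - w \<in> {x. ring_unit (1 - x)}" using fw(3) by simp
    hence j: "1 - w \<in> jacobson" using H by blast
    have f2: "f * 2 \<in> jacobson" using jac_mult[OF two] .
    have u: "a - (1 - f) \<in> jacobson"
    proof -
      have eq: "a - (1 - f) = f * 2 + - (1 - w)" using fw(1) by (simp add: algebra_simps mult_2_right)
      have m: "- (1 - w) \<in> jacobson" using jac_mult[OF j, of "-1"] by simp
      show ?thesis unfolding eq by (rule jac_add[OF f2 m])
    qed
    have ff: "f * f = f" "st f = f" using fw(2) unfolding projection_def by auto
    have "st (1 - f) = st 1 - st f" by (rule st_props(3)[OF assms])
    hence s1: "st (1 - f) = 1 - f" using ff st_props(1)[OF assms] by simp
    have "(1 - f) * (1 - f) = 1 - f" using ff by (simp add: algebra_simps)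
    hence p: "projection st (1 - f)" using s1 unfolding projection_def by simp
    have c: "a * (1 - f) = (1 - f) * a" using fw(1,2,4) unfolding projection_def
      by (simp add: algebra_simps)
    show "\<exists>e u. a = e + u \<and> projection st e \<and> u \<in> jacobson \<and> a * e = e * a"
      using u p c by (intro exI[of _ "1 - f"] exI[of _ "a - (1 - f)"]) auto
  qed
qed

end
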